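(* Let $G=(V,E)$ be a connected graph on at least three vertices and let $E'$ be a minimum-size $(3,1)$-completion set of $G$. Then for every edge $e'\in E'$ there exists a triangle in $G\cup E'$ containing $e'$ such that at least one edge of this triangle is an edge of $G$ that is unsaturated in $G$.
   Context: A connected graph has a $(3,1)$-cover if each of its edges lies in at least one triangle. A set $E'\subseteq(V\times V)\setminus E$ of non-edges of $G$ is a $(3,1)$-completion set if $G\cup E'$ has a $(3,1)$-cover. An edge $e\in E$ is unsaturated in $G$ if it is contained in no triangle of $G$. *)

theory Defs
  imports Main
begin

definition simple_graph :: "'a set \<Rightarrow> 'a set set \<Rightarrow> bool" where
  "simple_graph V E \<longleftrightarrow> finite V \<and>
     (\<forall>e\<in>E. \<exists>u v. e = {u, v} \<and> u \<noteq> v \<and> u \<in> V \<and> v \<in> V)"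

definition connected_graph :: "'a set \<Rightarrow> 'a set set \<Rightarrow> bool" where
  "connected_graph V E \<longleftrightarrow> simple_graph V E \<and>
     (\<forall>u\<in>V. \<forall>v\<in>V. (\<lambda>x y. {x, y} \<in> E)\<^sup>*\<^sup>* u v)"

definition in_triangle :: "'a set set \<Rightarrow> 'a set \<Rightarrow> bool" where
  "in_triangle E e \<longleftrightarrow> e \<in> E \<and> (\<exists>a b c. e = {a, b} \<and> {a, c} \<in> E \<and> {b, c} \<in> E)"

definition has_31_cover :: "'a set set \<Rightarrow> bool" where
  "has_31_cover E \<longleftrightarrow> (\<forall>e\<in>E. in_triangle E e)"

definition non_edges :: "'a set \<Rightarrow> 'a set set \<Rightarrow> 'a set set" where
  "non_edges V E = {{u, v} | u v. u \<in> V \<and> v \<in> V \<and> u \<noteq> v} - E"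

definition completion_set_31 :: "'a set \<Rightarrow> 'a set set \<Rightarrow> 'a set set \<Rightarrow> bool" where
  "completion_set_31 V E E' \<longleftrightarrow> E' \<subseteq> non_edges V E \<and> has_31_cover (E \<union> E')"

definition min_completion_set_31 :: "'a set \<Rightarrow> 'a set set \<Rightarrow> 'a set set \<Rightarrow> bool" where
  "min_completion_set_31 V E E' \<longleftrightarrow> completion_set_31 V E E' \<and>
     (\<forall>F. completion_set_31 V E F \<longrightarrow> card E' \<le> card F)"

definition unsaturated :: "'a set set \<Rightarrow> 'a set \<Rightarrow> bool" where
  "unsaturated E e \<longleftrightarrow> e \<in> E \<and> \<not> in_triangle E e"

end

theory Submission
  imports Defs
begin

definition goodS :: "'a set set \<Rightarrow> 'a set set \<Rightarrow> 'a set set" where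
  "goodS E E' = {e'\<in>E'. \<exists>a b c. e' = {a, b} \<and> {a, c} \<in> E \<union> E' \<and> {b, c} \<in> E \<union> E' \<and>
           (unsaturated E {a, b} \<or> unsaturated E {a, c} \<or> unsaturated E {b, c})}"

lemma tri_S1:
  assumes "{a,b}\<in>E\<union>E'" "{a,c}\<in>E\<union>E'" "{b,c}\<in>E\<union>E'"
    "unsaturated E {a, b} \<or> unsaturated E {a, c} \<or> unsaturated E {b, c}"
  shows "{a,b} \<in> E \<union> goodS E E'"
  using assms unfolding goodS_def by blast

lemma tri_S:
  assumes "{a,b}\<in>E\<union>E'" "{a,c}\<in>E\<union>E'" "{b,c}\<in>E\<union>E'"
    "unsaturated E {a, b} \<or> unsaturated E {a, c} \<or> unsaturated E {b, c}"
  shows "{a,b} \<in> E \<union> goodS E E'" "{a,c} \<in> E \<union> goodS E E'" "{b,c} \<in> E \<union> goodS E E'"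
proof -
  show "{a,b} \<in> E \<union> goodS E E'" using tri_S1[OF assms] .
  show "{a,c} \<in> E \<union> goodS E E'"
  proof -
    have bc: "{c,b} = {b,c}" by blast
    show ?thesis using tri_S1[of a c E E' b] assms unfolding bc by blast
  qed
  show "{b,c} \<in> E \<union> goodS E E'"
  proof -
    have ab: "{b,a} = {a,b}" and ac: "{c,a} = {a,c}" by blast+
    show ?thesis using tri_S1[of b c E E' a] assms unfolding ab ac by blast
  qed
qed

theorem lemma11:
  fixes V :: "'a set" and E E' :: "'a set set"
  assumes "connected_graph V E"
    and "card V \<ge> 3"
    and "min_completion_set_31 V E E'"
  shows "\<forall>e'\<in>E'. \<exists>a b c. e' = {a, b} \<and> {a, c} \<in> E \<union> E' \<and> {b, c} \<in> E \<union> E' \<and>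
           (unsaturated E {a, b} \<or> unsaturated E {a, c} \<or> unsaturated E {b, c})"
proof -
  let ?S = "goodS E E'"
  have fV: "finite V" using assms(1) unfolding connected_graph_def simple_graph_def by blast
  have sub: "E' \<subseteq> non_edges V E" and cov: "has_31_cover (E \<union> E')"
    and mn: "\<And>F. completion_set_31 V E F \<Longrightarrow> card E' \<le> card F"
    using assms(3) unfolding min_completion_set_31_def completion_set_31_def by auto
  have "non_edges V E \<subseteq> Pow V" unfolding non_edges_def by auto
  hence fE': "finite E'" using sub fV by (meson finite_Pow_iff finite_subset subset_trans)
  have SE': "?S \<subseteq> E'" unfolding goodS_def by auto
  have "has_31_cover (E \<union> ?S)"
    unfolding has_31_cover_def
  proof
    fix e assume e: "e \<in> E \<union> ?S"
    show "in_triangle (E \<union> ?S) e"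
    proof (cases "e \<in> E \<and> in_triangle E e")
      case True
      then obtain a b c where "e = {a,b}" "{a,c} \<in> E" "{b,c} \<in> E"
        unfolding in_triangle_def by blast
      thus ?thesis unfolding in_triangle_def using e by blast
    next
      case False
      have "\<exists>a b c. e = {a,b} \<and> {a,c} \<in> E \<union> E' \<and> {b,c} \<in> E \<union> E' \<and>
           (unsaturated E {a, b} \<or> unsaturated E {a, c} \<or> unsaturated E {b, c})"
      proof (cases "e \<in> E")
        case True
        hence "e \<in> E \<union> E'" by auto
        hence "in_triangle (E \<union> E') e" using cov unfolding has_31_cover_def by blast
        then obtain a b c where abc: "e = {a,b}" "{a,c} \<in> E \<union> E'" "{b,c} \<in> E \<union> E'"
          unfolding in_triangle_def by blast
        have "unsaturated E e" using True False unfolding unsaturated_def by simp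
        hence "unsaturated E {a,b}" using abc(1) by simp
        thus ?thesis using abc by blast
      next
        case False
        hence "e \<in> ?S" using e by auto
        thus ?thesis unfolding goodS_def by blast
      qed
      then obtain a b c where abc: "e = {a,b}" "{a,c} \<in> E \<union> E'" "{b,c} \<in> E \<union> E'"
           "unsaturated E {a, b} \<or> unsaturated E {a, c} \<or> unsaturated E {b, c}" by blast
      have "{a,b} \<in> E \<union> E'" using e SE' abc(1) by auto
      note t = tri_S[OF this abc(2-4)]
      show ?thesis unfolding in_triangle_def using t abc(1) e by blast
    qed
  qed
  hence "completion_set_31 V E ?S" using SE' sub unfolding completion_set_31_def by auto
  hence "card E' \<le> card ?S" by (rule mn)
  hence "?S = E'" using SE' fE' by (meson card_seteq)
  thus ?thesis unfolding goodS_def by blast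
qed

end
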